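(* Let $F$ be a Lorenz-like map as in the context with vertical contraction rate $\lambda<1$, let $\delta'$ be the inverse of a positive integer, and let $L_{|\delta}=P_|\,L_F\,P_|$. Let $\mu,\nu$ be Borel probability measures on $Q$ with absolutely continuous $x$-marginals $\mu_x,\nu_x$. Then for every $n\ge1$, $$\|L_{|\delta}^n\mu-L_{|\delta}^n\nu\|\le \lambda^n+\frac{2\delta'}{1-\lambda}+V(\mu_x,\nu_x).$$
   Context: Let $I=[0,1]$, $Q=I\times I$ with the sup metric (diameter 1); $m$ is Lebesgue measure. A Lorenz-like map is $F(x,y)=(T(x),G(x,y))$ with: (i) $T:I\to I$ onto, with $0=c_0<\dots<c_N=1$ such that on each $(c_i,c_{i+1})$ $T$ is continuous, increasing, $C^1$, $\inf|T'|>1$ (derivative possibly unbounded); (ii) $|G(x,y_1)-G(x,y_2)|\le\lambda|y_1-y_2|$ with $\lambda<1$; (iii) $G:Q\to(0,1)$ is $C^1$ on $P\times[0,1]$, $P=[0,1]\setminus\{c_i\}$, $\sup|\partial_xG|<\infty$, $|\partial_yG|>0$ there; (iv) $1/|T'|$ has bounded variation. $L_F\mu(A)=\mu(F^{-1}A)$; $\mu_x=(\pi_1)_*\mu$, $\pi_1(x,y)=x$. $\|\mu\|=\sup\{|\int g\,d\mu|:\mathrm{Lip}(g)\le1,\|g\|_\infty\le1\}$ and $W(\mu,\nu)=\|\mu-\nu\|$. Total variation distance: $V(\mu_x,\nu_x)=\sup_{\|g\|_\infty\le1}|\int g\,d\mu_x-\int g\,d\nu_x|$. Divide $[0,1]$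 in the $y$-direction into intervals $J_1,\dots,J_{1/\delta'}$ of length $\delta'$ and let $S_i=[0,1]\times J_i$ be the horizontal strips. The vertical averaging operator $P_|$ is defined by: for each $i$, the restriction of $P_|\mu$ to $S_i$ equals $(\pi_1)_*(\mu|_{S_i})\otimes u_{J_i}$, where $u_{J_i}$ is the uniform probability measure on $J_i$ (i.e. inside each strip the vertical distribution of mass is replaced by the uniform one, keeping the $x$-distribution). *)

theory Defs
  imports "HOL-Probability.Probability"
begin

definition unit_sq :: "(real \<times> real) set" where
  "unit_sq = {0..1} \<times> {0..1}"

definition dist_sup :: "real \<times> real \<Rightarrow> real \<times> real \<Rightarrow> real" where
  "dist_sup p q = max \<bar>fst p - fst q\<bar> \<bar>snd p - snd q\<bar>"

definition bounded_variation_on :: "(real \<Rightarrow> real) \<Rightarrow> real set \<Rightarrow> bool" where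
  "bounded_variation_on f S \<longleftrightarrow> (\<exists>B. \<forall>(k::nat) (t::nat \<Rightarrow> real).
      (\<forall>j\<le>k. t j \<in> S) \<and> (\<forall>j<k. t j < t (Suc j)) \<longrightarrow>
      (\<Sum>j<k. \<bar>f (t (Suc j)) - f (t j)\<bar>) \<le> B)"

definition lorenz_like ::
  "(real \<Rightarrow> real) \<Rightarrow> (real \<times> real \<Rightarrow> real) \<Rightarrow> real \<Rightarrow> bool" where
  "lorenz_like T G lam \<longleftrightarrow>
    (\<exists>(N::nat) (c::nat \<Rightarrow> real) (T'::real \<Rightarrow> real) (Gx::real \<times> real \<Rightarrow> real) (Gy::real \<times> real \<Rightarrow> real).
      let P = {0..1} - c ` {0..N} in
      N \<ge> 1 \<and> c 0 = 0 \<and> c N = 1 \<and> (\<forall>i<N. c i < c (Suc i)) \<and>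
      \<comment> \<open>(i)\<close>
      T ` {0..1} = {0..1} \<and>
      (\<forall>i<N. continuous_on {c i<..<c (Suc i)} T
            \<and> strict_mono_on {c i<..<c (Suc i)} T
            \<and> (\<forall>x\<in>{c i<..<c (Suc i)}. (T has_real_derivative T' x) (at x))
            \<and> continuous_on {c i<..<c (Suc i)} T') \<and>
      (\<exists>\<rho>>1. \<forall>x\<in>P. \<rho> \<le> \<bar>T' x\<bar>) \<and>
      \<comment> \<open>(ii)\<close>
      (\<forall>x\<in>{0..1}. \<forall>y1\<in>{0..1}. \<forall>y2\<in>{0..1}. \<bar>G (x, y1) - G (x, y2)\<bar> \<le> lam * \<bar>y1 - y2\<bar>) \<and>
      \<comment> \<open>(iii)\<close>
      (\<forall>p\<in>unit_sq. 0 < G p \<and> G p < 1) \<and>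
      (\<forall>p\<in>P \<times> {0..1}. (G has_derivative (\<lambda>(h, k). Gx p * h + Gy p * k)) (at p within P \<times> {0..1})) \<and>
      continuous_on (P \<times> {0..1}) Gx \<and> continuous_on (P \<times> {0..1}) Gy \<and>
      bounded (Gx ` (P \<times> {0..1})) \<and>
      (\<forall>p\<in>P \<times> {0..1}. Gy p \<noteq> 0) \<and>
      \<comment> \<open>(iv)\<close>
      bounded_variation_on (\<lambda>x. 1 / \<bar>T' x\<bar>) P)"

text \<open>The map F, extended by the identity outside Q (all measures considered live on Q).\<close>
definition lorenz_map :: "(real \<Rightarrow> real) \<Rightarrow> (real \<times> real \<Rightarrow> real) \<Rightarrow> real \<times> real \<Rightarrow> real \<times> real" where
  "lorenz_map T G p = (if p \<in> unit_sq then (T (fst p), G p) else p)"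

definition transfer :: "(real \<Rightarrow> real) \<Rightarrow> (real \<times> real \<Rightarrow> real) \<Rightarrow>
    (real \<times> real) measure \<Rightarrow> (real \<times> real) measure" where
  "transfer T G M = distr M borel (lorenz_map T G)"

text \<open>With K = 1/delta', the intervals J_0, ..., J_{K-1} partition [0,1]:
  J_i = [i/K, (i+1)/K) for i < K-1 and J_{K-1} = [(K-1)/K, 1].\<close>
definition strip_int :: "nat \<Rightarrow> nat \<Rightarrow> real set" where
  "strip_int K i = (if Suc i = K then {real i / real K .. 1}
                    else {real i / real K ..< real (Suc i) / real K})"

definition strip :: "nat \<Rightarrow> nat \<Rightarrow> (real \<times> real) set" where
  "strip K i = {0..1} \<times> strip_int K i"

definition strip_part :: "nat \<Rightarrow> (real \<times> real) measure \<Rightarrow> nat \<Rightarrow> (real \<times> real) measure" where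
  "strip_part K M i =
     distr (density M (indicator (strip K i))) lborel fst
       \<Otimes>\<^sub>M uniform_measure lborel (strip_int K i)"

definition vert_avg :: "nat \<Rightarrow> (real \<times> real) measure \<Rightarrow> (real \<times> real) measure" where
  "vert_avg K M = measure_of UNIV (sets borel) (\<lambda>A. \<Sum>i<K. emeasure (strip_part K M i) A)"

definition L_delta :: "nat \<Rightarrow> (real \<Rightarrow> real) \<Rightarrow> (real \<times> real \<Rightarrow> real) \<Rightarrow>
    (real \<times> real) measure \<Rightarrow> (real \<times> real) measure" where
  "L_delta K T G M = vert_avg K (transfer T G (vert_avg K M))"

definition W_dist :: "(real \<times> real) measure \<Rightarrow> (real \<times> real) measure \<Rightarrow> real" where
  "W_dist M N = (SUP g \<in> {g :: real \<times> real \<Rightarrow> real.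
        (\<forall>p\<in>unit_sq. \<forall>q\<in>unit_sq. \<bar>g p - g q\<bar> \<le> dist_sup p q) \<and> (\<forall>p\<in>unit_sq. \<bar>g p\<bar> \<le> 1)}.
      \<bar>(\<integral>p. indicator unit_sq p * g p \<partial>M) - (\<integral>p. indicator unit_sq p * g p \<partial>N)\<bar>)"

definition V_dist :: "real measure \<Rightarrow> real measure \<Rightarrow> real" where
  "V_dist M N = (SUP g \<in> {g :: real \<Rightarrow> real. g \<in> borel_measurable borel \<and> (\<forall>x. \<bar>g x\<bar> \<le> 1)}.
      \<bar>(\<integral>x. g x \<partial>M) - (\<integral>x. g x \<partial>N)\<bar>)"

definition x_marginal :: "(real \<times> real) measure \<Rightarrow> real measure" where
  "x_marginal M = distr M lborel fst"

definition prob_on_Q :: "(real \<times> real) measure \<Rightarrow> bool" where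
  "prob_on_Q M \<longleftrightarrow> prob_space M \<and> sets M = sets borel \<and> emeasure M unit_sq = 1"

end

theory Submission
  imports Defs
begin



lemma nn_integral_sum_measure:
  fixes N :: "'a::topological_space measure" and Ni :: "nat \<Rightarrow> 'a measure"
  assumes fin: "finite I" and sN: "sets N = sets borel"
    and sNi: "\<And>i. i \<in> I \<Longrightarrow> sets (Ni i) = sets borel"
    and e: "\<And>A. A \<in> sets borel \<Longrightarrow> emeasure N A = (\<Sum>i\<in>I. emeasure (Ni i) A)"
    and f: "f \<in> borel_measurable borel"
  shows "(\<integral>\<^sup>+x. f x \<partial>N) = (\<Sum>i\<in>I. \<integral>\<^sup>+x. f x \<partial>Ni i)"
proof -
  have mN: "\<And>h::'a\<Rightarrow>ennreal. h \<in> borel_measurable borel \<Longrightarrow> h \<in> borel_measurable N"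
    by (subst measurable_cong_sets[OF sN refl]) simp
  have mNi: "\<And>(h::'a\<Rightarrow>ennreal) i. i \<in> I \<Longrightarrow> h \<in> borel_measurable borel \<Longrightarrow> h \<in> borel_measurable (Ni i)"
    by (subst measurable_cong_sets[OF sNi refl]) simp_all
  show ?thesis using f
  proof (induct rule: borel_measurable_induct)
    case (cong u v)
    have "u = v" using cong(3) by (intro ext) simp
    then show ?case using cong(4) by (simp only:)
  next
    case (set A)
    have "A \<in> sets N" "\<And>i. i \<in> I \<Longrightarrow> A \<in> sets (Ni i)" using set sN sNi by auto
    then show ?case using set e by (simp add: nn_integral_indicator)
  next
    case (mult u c)
    have "integral\<^sup>N N (\<lambda>x. c * u x) = c * integral\<^sup>N N u"
      using mN[OF mult(2)] by (rule nn_integral_cmult)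
    also have "\<dots> = c * (\<Sum>i\<in>I. integral\<^sup>N (Ni i) u)" using mult(4) by (simp only:)
    also have "\<dots> = (\<Sum>i\<in>I. c * integral\<^sup>N (Ni i) u)" by (rule sum_distrib_left)
    also have "\<dots> = (\<Sum>i\<in>I. integral\<^sup>N (Ni i) (\<lambda>x. c * u x))"
      by (intro sum.cong refl nn_integral_cmult[symmetric] mNi mult(2))
    finally show ?case .
  next
    case (add u v)
    have "integral\<^sup>N N (\<lambda>x. v x + u x) = integral\<^sup>N N v + integral\<^sup>N N u"
      using mN[OF add(4)] mN[OF add(1)] by (rule nn_integral_add)
    also have "\<dots> = (\<Sum>i\<in>I. integral\<^sup>N (Ni i) v) + (\<Sum>i\<in>I. integral\<^sup>N (Ni i) u)"
      using add(3) add(7) by (simp only:)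
    also have "\<dots> = (\<Sum>i\<in>I. integral\<^sup>N (Ni i) v + integral\<^sup>N (Ni i) u)" by (rule sum.distrib[symmetric])
    also have "\<dots> = (\<Sum>i\<in>I. integral\<^sup>N (Ni i) (\<lambda>x. v x + u x))"
      by (intro sum.cong refl nn_integral_add[symmetric] mNi add(1) add(4))
    finally show ?case .
  next
    case (seq U)
    have mU: "\<And>j. U j \<in> borel_measurable N" using mN seq(1) by blast
    have inc: "\<And>i. incseq (\<lambda>j. integral\<^sup>N (Ni i) (U j))"
      using seq(4) unfolding incseq_def le_fun_def by (blast intro: nn_integral_mono)
    have "(\<integral>\<^sup>+x. (SUP j. U j) x \<partial>N) = (\<integral>\<^sup>+x. (SUP j. U j x) \<partial>N)" by (simp only: SUP_apply)
    also have "\<dots> = (SUP j. integral\<^sup>N N (U j))"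
      by (rule nn_integral_monotone_convergence_SUP[OF seq(4) mU])
    also have "\<dots> = (SUP j. \<Sum>i\<in>I. integral\<^sup>N (Ni i) (U j))" using seq(3) by (simp only:)
    also have "\<dots> = (\<Sum>i\<in>I. SUP j. integral\<^sup>N (Ni i) (U j))"
      by (rule ennreal_SUP_sum[OF inc])
    also have "\<dots> = (\<Sum>i\<in>I. \<integral>\<^sup>+x. (SUP j. U j x) \<partial>Ni i)"
      by (intro sum.cong refl nn_integral_monotone_convergence_SUP[OF seq(4), symmetric] mNi seq(1))
    finally show ?case by (simp only: SUP_apply)
  qed
qed




lemma strip_int_sets: "strip_int K i \<in> sets borel"
  unfolding strip_int_def by auto

lemma strip_sets: "strip K i \<in> sets borel"
proof -
  have "{0..1::real} \<times> strip_int K i \<in> sets (borel \<Otimes>\<^sub>M borel)"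
    using strip_int_sets by (intro pair_measureI) auto
  then show ?thesis unfolding strip_def borel_prod .
qed

lemma strip_int_sub: "i < K \<Longrightarrow> strip_int K i \<subseteq> {0..1}"
proof
  fix y assume i: "i < K" and y: "y \<in> strip_int K i"
  have K: "real K > 0" using i by simp
  have a: "real i / real K \<ge> 0" by simp
  have b: "real (Suc i) / real K \<le> 1" using i K by (simp add: field_simps)
  have c: "real i / real K \<le> y" using y unfolding strip_int_def by (auto split: if_splits)
  have d: "y \<le> 1" using y b unfolding strip_int_def by (auto split: if_splits)
  have "0 \<le> y" using a c by linarith
  then show "y \<in> {0..1}" using d by simp
qed

lemma strip_int_diam:
  assumes i: "i < K" and y: "y \<in> strip_int K i" and t: "t \<in> strip_int K i"
  shows "\<bar>y - t\<bar> \<le> 1 / real K"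
proof -
  have K: "real K > 0" using i by simp
  have a: "real i / real K \<le> y" "real i / real K \<le> t"
    using y t unfolding strip_int_def by (auto split: if_splits)
  have b: "y \<le> real (Suc i) / real K" "t \<le> real (Suc i) / real K"
  proof -
    have "Suc i = K \<Longrightarrow> real (Suc i) / real K = 1" using K by simp
    then show "y \<le> real (Suc i) / real K" "t \<le> real (Suc i) / real K"
      using y t unfolding strip_int_def by (auto split: if_splits)
  qed
  have "real (Suc i) / real K - real i / real K = 1 / real K"
    by (simp add: add_divide_distrib)
  then show ?thesis using a b by linarith
qed

lemma strip_int_cover:
  assumes K: "K > 0" and y: "y \<in> {0..1::real}"
  shows "\<exists>i<K. y \<in> strip_int K i"
proof (cases "y = 1")
  case True
  then show ?thesis using K
    by (intro exI[of _ "K - 1"]) (auto simp: strip_int_def of_nat_diff)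
next
  case False
  have Kr: "real K > 0" using K by simp
  define i where "i = nat \<lfloor>y * real K\<rfloor>"
  have y1: "0 \<le> y" "y < 1" using y False by auto
  have fl: "real i \<le> y * real K" "y * real K < real i + 1"
    using y1 unfolding i_def by (auto simp: of_nat_nat floor_le_iff)
  have "y * real K < real K" using y1 Kr by simp
  then have iK: "i < K" using fl by linarith
  have l: "real i / real K \<le> y" using fl Kr by (simp add: field_simps)
  have u: "y < real (Suc i) / real K" using fl Kr by (simp add: field_simps)
  show ?thesis using iK l u y1 by (intro exI[of _ i]) (auto simp: strip_int_def)
qed

lemma strip_int_disj:
  assumes "i < K" "j < K" "i \<noteq> j"
  shows "strip_int K i \<inter> strip_int K j = {}"
proof -
  have K: "real K > 0" using assms by simp
  { fix i j :: nat assume ij: "i < j" "j < K"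
    have "Suc i \<noteq> K" using ij by simp
    then have A: "strip_int K i = {real i / real K ..< real (Suc i) / real K}"
      by (simp add: strip_int_def)
    have B: "strip_int K j \<subseteq> {real j / real K ..}" by (auto simp: strip_int_def)
    have "real (Suc i) / real K \<le> real j / real K" using ij K by (simp add: divide_right_mono)
    then have "strip_int K i \<inter> strip_int K j = {}" using A B by auto }
  note * = this
  show ?thesis
  proof (cases "i < j")
    case True then show ?thesis using * assms by blast
  next
    case False then have "j < i" using assms by simp
    then show ?thesis using * assms by blast
  qed
qed

lemma emeasure_strip_int:
  assumes "i < K"
  shows "emeasure lborel (strip_int K i) = ennreal (1 / real K)"
proof -
  have K: "real K > 0" using assms by simp
  have le: "real i / real K \<le> real (Suc i) / real K" using K by (simp add: divide_right_mono)
  have "real (Suc i) / real K - real i / real K = 1 / real K"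
    by (simp add: add_divide_distrib)
  moreover have "Suc i = K \<Longrightarrow> real (Suc i) / real K = 1" using K by simp
  ultimately show ?thesis using le unfolding strip_int_def by (auto simp del: of_nat_Suc)
qed

lemma prob_U: "i < K \<Longrightarrow> prob_space (uniform_measure lborel (strip_int K i))"
  by (rule prob_space_uniform_measure) (auto simp: emeasure_strip_int)



lemma sets_strip_part: "sets (strip_part K M i) = sets borel"
proof -
  have "sets (strip_part K M i) = sets (borel \<Otimes>\<^sub>M (borel :: real measure))"
    unfolding strip_part_def by (rule sets_pair_measure_cong) simp_all
  then show ?thesis by (simp only: borel_prod)
qed

lemma sets_vert_avg: "sets (vert_avg K M) = sets borel"
proof -
  have "sigma_sets UNIV (sets (borel :: (real \<times> real) measure)) = sets borel"
    using sets.sigma_sets_eq[of "borel :: (real \<times> real) measure"] by simp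
  then show ?thesis unfolding vert_avg_def by (subst sets_measure_of) auto
qed

lemma emeasure_vert_avg:
  assumes A: "A \<in> sets borel"
  shows "emeasure (vert_avg K M) A = (\<Sum>i<K. emeasure (strip_part K M i) A)"
  unfolding vert_avg_def
proof (rule emeasure_measure_of_sigma)
  show "sigma_algebra UNIV (sets (borel :: (real \<times> real) measure))"
    using sets.sigma_algebra_axioms[of "borel :: (real \<times> real) measure"] by simp
  show "positive (sets borel) (\<lambda>A. \<Sum>i<K. emeasure (strip_part K M i) A)"
    unfolding positive_def by simp
  show "countably_additive (sets borel) (\<lambda>A. \<Sum>i<K. emeasure (strip_part K M i) A)"
    unfolding countably_additive_def
  proof (intro allI impI)
    fix B :: "nat \<Rightarrow> (real \<times> real) set"
    assume B: "range B \<subseteq> sets borel" "disjoint_family B" "\<Union> (range B) \<in> sets borel"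
    have "(\<Sum>n. \<Sum>i<K. emeasure (strip_part K M i) (B n)) = (\<Sum>i<K. \<Sum>n. emeasure (strip_part K M i) (B n))"
      by (rule suminf_sum) (rule summableI)
    also have "\<dots> = (\<Sum>i<K. emeasure (strip_part K M i) (\<Union> (range B)))"
    proof (rule sum.cong[OF refl])
      fix i
      have "range B \<subseteq> sets (strip_part K M i)" using B(1) sets_strip_part by metis
      then show "(\<Sum>n. emeasure (strip_part K M i) (B n)) = emeasure (strip_part K M i) (\<Union> (range B))"
        using B(2) by (rule suminf_emeasure)
    qed
    finally show "(\<Sum>n. \<Sum>i<K. emeasure (strip_part K M i) (B n)) = (\<Sum>i<K. emeasure (strip_part K M i) (\<Union> (range B)))" .
  qed
qed (rule A)

lemma measurable_fst_borel: "fst \<in> measurable (borel :: (real \<times> real) measure) (borel :: real measure)"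
proof -
  have "fst \<in> measurable (borel \<Otimes>\<^sub>M (borel :: real measure)) (borel :: real measure)"
    by (rule measurable_fst)
  then show ?thesis by (simp only: borel_prod)
qed

lemma meas_pair_U:
  fixes f :: "real \<times> real \<Rightarrow> 'b::topological_space"
  assumes f: "f \<in> borel_measurable borel" and that: "sets N = sets borel"
  shows "f \<in> borel_measurable (N \<Otimes>\<^sub>M uniform_measure lborel S)"
proof -
  have "sets (N \<Otimes>\<^sub>M uniform_measure lborel S) = sets (borel \<Otimes>\<^sub>M (borel :: real measure))"
    by (rule sets_pair_measure_cong) (simp_all add: that)
  then have "sets (N \<Otimes>\<^sub>M uniform_measure lborel S) = sets borel" by (simp only: borel_prod)
  then show ?thesis using f by (subst measurable_cong_sets) auto
qed

lemma meas_inner_nn: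
  fixes f :: "real \<times> real \<Rightarrow> ennreal"
  assumes i: "i < K" and f: "f \<in> borel_measurable borel"
  shows "(\<lambda>x. \<integral>\<^sup>+ t. f (x, t) \<partial>uniform_measure lborel (strip_int K i)) \<in> borel_measurable borel"
proof -
  interpret U: prob_space "uniform_measure lborel (strip_int K i)" by (rule prob_U[OF i])
  have "case_prod (\<lambda>x t. f (x, t)) \<in> borel_measurable (borel \<Otimes>\<^sub>M uniform_measure lborel (strip_int K i))"
    using meas_pair_U[OF f, of borel] by simp
  then show ?thesis by (rule U.borel_measurable_nn_integral)
qed

lemma meas_inner_real:
  fixes f :: "real \<times> real \<Rightarrow> real"
  assumes i: "i < K" and f: "f \<in> borel_measurable borel"
  shows "(\<lambda>x. \<integral> t. f (x, t) \<partial>uniform_measure lborel (strip_int K i)) \<in> borel_measurable borel"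
proof -
  interpret U: prob_space "uniform_measure lborel (strip_int K i)" by (rule prob_U[OF i])
  have "case_prod (\<lambda>x t. f (x, t)) \<in> borel_measurable (borel \<Otimes>\<^sub>M uniform_measure lborel (strip_int K i))"
    using meas_pair_U[OF f, of borel] by simp
  then show ?thesis by (rule U.borel_measurable_lebesgue_integral)
qed

lemma nn_integral_strip_part:
  fixes f :: "real \<times> real \<Rightarrow> ennreal"
  assumes M: "finite_measure M" "sets M = sets borel" and i: "i < K" and f: "f \<in> borel_measurable borel"
  shows "integral\<^sup>N (strip_part K M i) f =
    (\<integral>\<^sup>+ p. indicator (strip K i) p * (\<integral>\<^sup>+ t. f (fst p, t) \<partial>uniform_measure lborel (strip_int K i)) \<partial>M)"
proof -
  define U where "U = uniform_measure lborel (strip_int K i)"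
  define Dn where "Dn = density M (indicator (strip K i))"
  define D where "D = distr Dn lborel fst"
  define g where "g = (\<lambda>x. \<integral>\<^sup>+ t. f (x, t) \<partial>U)"
  interpret U: prob_space U unfolding U_def by (rule prob_U[OF i])
  have fm: "finite_measure Dn" unfolding Dn_def
    by (rule finite_measure.finite_measure_restricted[OF M(1)]) (simp add: M(2) strip_sets)
  have sDn: "sets Dn = sets borel" unfolding Dn_def using M(2) by simp
  have mfst: "fst \<in> measurable Dn lborel"
    using measurable_fst_borel by (subst measurable_cong_sets[OF sDn]) simp_all
  have sD: "sets D = sets borel" unfolding D_def by simp
  have fD: "f \<in> borel_measurable (D \<Otimes>\<^sub>M U)" unfolding U_def by (rule meas_pair_U[OF f sD])
  have g: "g \<in> borel_measurable borel" unfolding g_def U_def by (rule meas_inner_nn[OF i f])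
  have gD: "g \<in> borel_measurable D" using g by (subst measurable_cong_sets[OF sD]) simp_all
  have gM: "(\<lambda>p. g (fst p)) \<in> borel_measurable M"
  proof -
    have "(\<lambda>p::real\<times>real. g (fst p)) \<in> borel_measurable borel"
      using measurable_compose[OF measurable_fst_borel g] by (simp add: o_def)
    then show ?thesis by (subst measurable_cong_sets[OF M(2)]) simp_all
  qed
  have iM: "indicator (strip K i) \<in> borel_measurable M"
    using strip_sets M(2) by (intro borel_measurable_indicator) simp
  have "integral\<^sup>N (strip_part K M i) f = integral\<^sup>N (D \<Otimes>\<^sub>M U) f"
    unfolding strip_part_def D_def Dn_def U_def ..
  also have "\<dots> = (\<integral>\<^sup>+ x. g x \<partial>D)"
    unfolding g_def by (rule U.nn_integral_fst[OF fD, symmetric])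
  also have "\<dots> = (\<integral>\<^sup>+ p. g (fst p) \<partial>Dn)"
    unfolding D_def by (rule nn_integral_distr[OF mfst]) (simp add: g)
  also have "\<dots> = (\<integral>\<^sup>+ p. indicator (strip K i) p * g (fst p) \<partial>M)"
    unfolding Dn_def by (rule nn_integral_density[OF iM gM])
  finally show ?thesis unfolding g_def U_def .
qed

lemma nn_integral_vert_avg:
  fixes f :: "real \<times> real \<Rightarrow> ennreal"
  assumes M: "finite_measure M" "sets M = sets borel" and f: "f \<in> borel_measurable borel"
  shows "integral\<^sup>N (vert_avg K M) f =
    (\<integral>\<^sup>+ p. (\<Sum>i<K. indicator (strip K i) p * (\<integral>\<^sup>+ t. f (fst p, t) \<partial>uniform_measure lborel (strip_int K i))) \<partial>M)"
proof -
  have "integral\<^sup>N (vert_avg K M) f = (\<Sum>i<K. integral\<^sup>N (strip_part K M i) f)"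
    by (rule nn_integral_sum_measure[OF _ sets_vert_avg sets_strip_part emeasure_vert_avg f]) simp
  also have "\<dots> = (\<Sum>i<K. \<integral>\<^sup>+ p. indicator (strip K i) p * (\<integral>\<^sup>+ t. f (fst p, t) \<partial>uniform_measure lborel (strip_int K i)) \<partial>M)"
    by (intro sum.cong refl nn_integral_strip_part[OF M _ f]) simp
  also have "\<dots> = (\<integral>\<^sup>+ p. (\<Sum>i<K. indicator (strip K i) p * (\<integral>\<^sup>+ t. f (fst p, t) \<partial>uniform_measure lborel (strip_int K i))) \<partial>M)"
  proof (rule nn_integral_sum[symmetric])
    fix i assume "i \<in> {..<K}"
    then have i: "i < K" by simp
    have "(\<lambda>p::real\<times>real. \<integral>\<^sup>+ t. f (fst p, t) \<partial>uniform_measure lborel (strip_int K i)) \<in> borel_measurable borel"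
      using measurable_compose[OF measurable_fst_borel meas_inner_nn[OF i f]] by (simp add: o_def)
    moreover have "indicator (strip K i) \<in> (borel_measurable borel :: (real \<times> real \<Rightarrow> ennreal) set)"
      using strip_sets by (intro borel_measurable_indicator) simp
    ultimately have "(\<lambda>p. indicator (strip K i) p * (\<integral>\<^sup>+ t. f (fst p, t) \<partial>uniform_measure lborel (strip_int K i))) \<in> borel_measurable borel"
      by (rule borel_measurable_times_ennreal[rotated])
    then show "(\<lambda>p. indicator (strip K i) p * (\<integral>\<^sup>+ t. f (fst p, t) \<partial>uniform_measure lborel (strip_int K i))) \<in> borel_measurable M"
      by (subst measurable_cong_sets[OF M(2)]) simp_all
  qed
  finally show ?thesis .
qed



definition avgop :: "nat \<Rightarrow> (real \<times> real \<Rightarrow> real) \<Rightarrow> real \<times> real \<Rightarrow> real" where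
  "avgop K f p = (\<Sum>i<K. indicator (strip K i) p * (\<integral> t. f (fst p, t) \<partial>uniform_measure lborel (strip_int K i)))"

definition good :: "(real \<times> real \<Rightarrow> real) \<Rightarrow> real \<Rightarrow> bool" where
  "good f B \<longleftrightarrow> f \<in> borel_measurable borel \<and> (\<forall>p. \<bar>f p\<bar> \<le> B)"

lemma strip_disj: "i < K \<Longrightarrow> j < K \<Longrightarrow> i \<noteq> j \<Longrightarrow> strip K i \<inter> strip K j = {}"
  using strip_int_disj[of i K j] unfolding strip_def by auto

lemma avgop_in:
  assumes i: "i < K" and p: "p \<in> strip K i"
  shows "avgop K f p = (\<integral> t. f (fst p, t) \<partial>uniform_measure lborel (strip_int K i))"
proof -
  let ?a = "\<lambda>i. indicator (strip K i) p * (\<integral> t. f (fst p, t) \<partial>uniform_measure lborel (strip_int K i))"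
  have "avgop K f p = ?a i + sum ?a ({..<K} - {i})"
    unfolding avgop_def using i by (subst sum.remove[of _ i]) auto
  also have "sum ?a ({..<K} - {i}) = 0"
  proof (rule sum.neutral, rule ballI)
    fix j assume j: "j \<in> {..<K} - {i}"
    then have "p \<notin> strip K j" using strip_disj[of i K j] i p by auto
    then show "?a j = 0" by simp
  qed
  finally show ?thesis using p by simp
qed

lemma avgop_out: "(\<And>i. i < K \<Longrightarrow> p \<notin> strip K i) \<Longrightarrow> avgop K f p = 0"
  unfolding avgop_def by (intro sum.neutral) auto

lemma meas_slice:
  fixes f :: "real \<times> real \<Rightarrow> real"
  assumes f: "f \<in> borel_measurable borel"
  shows "(\<lambda>t. f (x, t)) \<in> borel_measurable borel"
proof -
  have "f \<in> borel_measurable (borel \<Otimes>\<^sub>M (borel :: real measure))" using f by (simp only: borel_prod)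
  then show ?thesis by (rule measurable_Pair2) simp
qed

lemma integrable_slice:
  assumes i: "i < K" and g: "good f B"
  shows "integrable (uniform_measure lborel (strip_int K i)) (\<lambda>t. f (x, t))"
proof -
  interpret U: prob_space "uniform_measure lborel (strip_int K i)" by (rule prob_U[OF i])
  have m: "(\<lambda>t. f (x, t)) \<in> borel_measurable (uniform_measure lborel (strip_int K i))"
    using meas_slice[of f x] g unfolding good_def by (subst measurable_cong_sets[of _ borel]) simp_all
  show ?thesis
    by (rule U.integrable_const_bound[where B=B]) (use g m in \<open>auto simp: good_def\<close>)
qed

lemma abs_int_U:
  assumes i: "i < K" and g: "good f B"
  shows "\<bar>\<integral> t. f (x, t) \<partial>uniform_measure lborel (strip_int K i)\<bar> \<le> B"
proof -
  interpret U: prob_space "uniform_measure lborel (strip_int K i)" by (rule prob_U[OF i])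
  have int: "integrable (uniform_measure lborel (strip_int K i)) (\<lambda>t. f (x, t))"
    by (rule integrable_slice[OF i g])
  have b: "\<And>t. \<bar>f (x, t)\<bar> \<le> B" using g unfolding good_def by blast
  have b1: "f (x, t) \<le> B" and b2: "- B \<le> f (x, t)" for t
    using b[of t] abs_ge_minus_self[of "f (x,t)"] abs_ge_self[of "f (x,t)"] by linarith+
  have "(\<integral> t. f (x, t) \<partial>uniform_measure lborel (strip_int K i)) \<le> B"
    using b1 by (intro U.integral_le_const[OF int] AE_I2) auto
  moreover have "- B \<le> (\<integral> t. f (x, t) \<partial>uniform_measure lborel (strip_int K i))"
    using b2 by (intro U.integral_ge_const[OF int] AE_I2) auto
  ultimately show ?thesis by simp
qed

lemma meas_avgop:
  assumes f: "f \<in> borel_measurable borel"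
  shows "avgop K f \<in> borel_measurable borel"
proof -
  have "(\<lambda>p. \<Sum>i<K. indicator (strip K i) p * (\<integral> t. f (fst p, t) \<partial>uniform_measure lborel (strip_int K i))) \<in> borel_measurable borel"
  proof (rule borel_measurable_sum)
    fix i assume "i \<in> {..<K}"
    then have i: "i < K" by simp
    have "(\<lambda>p::real\<times>real. \<integral> t. f (fst p, t) \<partial>uniform_measure lborel (strip_int K i)) \<in> borel_measurable borel"
      using measurable_compose[OF measurable_fst_borel meas_inner_real[OF i f]] by (simp add: o_def)
    moreover have "(indicator (strip K i) :: real \<times> real \<Rightarrow> real) \<in> borel_measurable borel"
      using strip_sets by (intro borel_measurable_indicator) simp
    ultimately show "(\<lambda>p. indicator (strip K i) p * (\<integral> t. f (fst p, t) \<partial>uniform_measure lborel (strip_int K i))) \<in> borel_measurable borel"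
      by (intro borel_measurable_times)
  qed
  then show ?thesis unfolding avgop_def[abs_def] .
qed

lemma good_avgop:
  assumes g: "good f B"
  shows "good (avgop K f) B"
  unfolding good_def
proof (intro conjI allI)
  show "avgop K f \<in> borel_measurable borel" using g meas_avgop unfolding good_def by blast
  have B: "0 \<le> B" using g unfolding good_def by (meson abs_ge_zero order_trans)
  fix p
  show "\<bar>avgop K f p\<bar> \<le> B"
  proof (cases "\<exists>i<K. p \<in> strip K i")
    case True
    then obtain i where i: "i < K" "p \<in> strip K i" by blast
    then show ?thesis using avgop_in[OF i] abs_int_U[OF i(1) g] by simp
  next
    case False
    then show ?thesis using avgop_out[of K p f] B by auto
  qed
qed

lemma integral_vert_avg_nonneg:
  assumes M: "finite_measure M" "sets M = sets borel" and g: "good f B" and nn: "\<And>p. 0 \<le> f p"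
  shows "(\<integral>\<^sup>+ p. ennreal (f p) \<partial>vert_avg K M) = (\<integral>\<^sup>+ p. ennreal (avgop K f p) \<partial>M)"
proof -
  have f0: "f \<in> borel_measurable borel" using g unfolding good_def by simp
  have fm: "(\<lambda>p. ennreal (f p)) \<in> borel_measurable borel"
    using measurable_compose[OF f0 measurable_ennreal] by (simp add: o_def)
  have "(\<integral>\<^sup>+ p. ennreal (f p) \<partial>vert_avg K M) =
    (\<integral>\<^sup>+ p. (\<Sum>i<K. indicator (strip K i) p * (\<integral>\<^sup>+ t. ennreal (f (fst p, t)) \<partial>uniform_measure lborel (strip_int K i))) \<partial>M)"
    by (rule nn_integral_vert_avg[OF M fm])
  also have "\<dots> = (\<integral>\<^sup>+ p. ennreal (avgop K f p) \<partial>M)"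
  proof (rule nn_integral_cong)
    fix p :: "real \<times> real"
    have "\<And>i. i \<in> {..<K} \<Longrightarrow> indicator (strip K i) p * (\<integral>\<^sup>+ t. ennreal (f (fst p, t)) \<partial>uniform_measure lborel (strip_int K i))
       = ennreal (indicator (strip K i) p * (\<integral> t. f (fst p, t) \<partial>uniform_measure lborel (strip_int K i)))"
    proof -
      fix i assume "i \<in> {..<K}"
      then have i: "i < K" by simp
      have "(\<integral>\<^sup>+ t. ennreal (f (fst p, t)) \<partial>uniform_measure lborel (strip_int K i)) =
          ennreal (\<integral> t. f (fst p, t) \<partial>uniform_measure lborel (strip_int K i))"
        by (rule nn_integral_eq_integral[OF integrable_slice[OF i g]]) (simp add: nn)
      moreover have "0 \<le> (\<integral> t. f (fst p, t) \<partial>uniform_measure lborel (strip_int K i))"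
        by (intro integral_nonneg_AE AE_I2) (simp add: nn)
      ultimately show "indicator (strip K i) p * (\<integral>\<^sup>+ t. ennreal (f (fst p, t)) \<partial>uniform_measure lborel (strip_int K i))
       = ennreal (indicator (strip K i) p * (\<integral> t. f (fst p, t) \<partial>uniform_measure lborel (strip_int K i)))"
        by (simp add: ennreal_mult ennreal_indicator)
    qed
    then have "(\<Sum>i<K. indicator (strip K i) p * (\<integral>\<^sup>+ t. ennreal (f (fst p, t)) \<partial>uniform_measure lborel (strip_int K i)))
      = (\<Sum>i<K. ennreal (indicator (strip K i) p * (\<integral> t. f (fst p, t) \<partial>uniform_measure lborel (strip_int K i))))"
      by (rule sum.cong[OF refl])
    also have "\<dots> = ennreal (avgop K f p)"
      unfolding avgop_def
      by (rule sum_ennreal) (intro mult_nonneg_nonneg integral_nonneg_AE AE_I2, auto simp: nn)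
    finally show "(\<Sum>i<K. indicator (strip K i) p * (\<integral>\<^sup>+ t. ennreal (f (fst p, t)) \<partial>uniform_measure lborel (strip_int K i))) = ennreal (avgop K f p)" .
  qed
  finally show ?thesis .
qed



lemma avgop_nonneg: "(\<And>p. 0 \<le> f p) \<Longrightarrow> 0 \<le> avgop K f p"
  unfolding avgop_def by (intro sum_nonneg mult_nonneg_nonneg integral_nonneg_AE AE_I2) auto

lemma good_mono: "good f B \<Longrightarrow> B \<le> C \<Longrightarrow> good f C"
  unfolding good_def by (meson order_trans)

lemma good_B_nonneg: "good f B \<Longrightarrow> 0 \<le> B"
  unfolding good_def by (meson abs_ge_zero order_trans)

lemma finite_vert_avg:
  assumes M: "finite_measure M" "sets M = sets borel"
  shows "finite_measure (vert_avg K M)"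
proof (rule finite_measureI)
  have g1: "good (\<lambda>_. 1) 1" unfolding good_def by simp
  have "emeasure (vert_avg K M) (space (vert_avg K M)) = (\<integral>\<^sup>+ p. ennreal 1 \<partial>vert_avg K M)"
    by simp
  also have "\<dots> = (\<integral>\<^sup>+ p. ennreal (avgop K (\<lambda>_. 1) p) \<partial>M)"
    by (rule integral_vert_avg_nonneg[OF M g1]) simp
  also have "\<dots> \<le> (\<integral>\<^sup>+ p. ennreal 1 \<partial>M)"
    using good_avgop[OF g1, of K] unfolding good_def
    by (intro nn_integral_mono ennreal_leI) (auto simp: abs_le_iff)
  also have "\<dots> = emeasure M (space M)" by simp
  also have "\<dots> < \<infinity>" using M(1) finite_measure.emeasure_finite[of M "space M"] by (simp add: top.not_eq_extremum)
  finally show "emeasure (vert_avg K M) (space (vert_avg K M)) \<noteq> \<infinity>" by simp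
qed

lemma meas_cong_borel:
  fixes f :: "real \<times> real \<Rightarrow> 'b::topological_space"
  shows "sets M = sets borel \<Longrightarrow> f \<in> borel_measurable borel \<Longrightarrow> f \<in> borel_measurable M"
  by (subst measurable_cong_sets[of M borel]) simp_all

lemma integral_vert_avg_nonneg_real:
  assumes M: "finite_measure M" "sets M = sets borel" and g: "good f B" and nn: "\<And>p. 0 \<le> f p"
  shows "integral\<^sup>L (vert_avg K M) f = integral\<^sup>L M (avgop K f)"
proof -
  have f0: "f \<in> borel_measurable borel" using g unfolding good_def by simp
  have a0: "avgop K f \<in> borel_measurable borel" using good_avgop[OF g] unfolding good_def by simp
  have "integral\<^sup>L (vert_avg K M) f = enn2real (\<integral>\<^sup>+ p. ennreal (f p) \<partial>vert_avg K M)"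
    by (rule integral_eq_nn_integral) (simp_all add: meas_cong_borel[OF sets_vert_avg f0] nn)
  also have "\<dots> = enn2real (\<integral>\<^sup>+ p. ennreal (avgop K f p) \<partial>M)"
    by (simp only: integral_vert_avg_nonneg[OF M g nn])
  also have "\<dots> = integral\<^sup>L M (avgop K f)"
    by (rule integral_eq_nn_integral[symmetric]) (simp_all add: meas_cong_borel[OF M(2) a0] avgop_nonneg nn)
  finally show ?thesis .
qed

lemma int_U_add_const:
  assumes i: "i < K" and g: "good f B"
  shows "(\<integral> t. f (x, t) + c \<partial>uniform_measure lborel (strip_int K i)) = (\<integral> t. f (x, t) \<partial>uniform_measure lborel (strip_int K i)) + c"
    and "(\<integral> t. c \<partial>uniform_measure lborel (strip_int K i)) = c"
proof -
  interpret U: prob_space "uniform_measure lborel (strip_int K i)" by (rule prob_U[OF i])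
  have "U.prob UNIV = 1" using U.prob_space by simp
  then show "(\<integral> t. c \<partial>uniform_measure lborel (strip_int K i)) = c" by simp
  then show "(\<integral> t. f (x, t) + c \<partial>uniform_measure lborel (strip_int K i)) = (\<integral> t. f (x, t) \<partial>uniform_measure lborel (strip_int K i)) + c"
  proof -
    have "(\<integral> t. f (x, t) + c \<partial>uniform_measure lborel (strip_int K i)) =
      (\<integral> t. f (x, t) \<partial>uniform_measure lborel (strip_int K i)) + (\<integral> t. c \<partial>uniform_measure lborel (strip_int K i))"
      by (rule Bochner_Integration.integral_add[OF integrable_slice[OF i g]]) simp
    then show ?thesis using \<open>(\<integral> t. c \<partial>uniform_measure lborel (strip_int K i)) = c\<close> by simp
  qed
qed

lemma integral_vert_avg:
  assumes M: "finite_measure M" "sets M = sets borel" and g: "good f B"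
  shows "integral\<^sup>L (vert_avg K M) f = integral\<^sup>L M (avgop K f)"
proof -
  have B: "0 \<le> B" by (rule good_B_nonneg[OF g])
  define f1 where "f1 = (\<lambda>p. f p + B)"
  have fm: "f \<in> borel_measurable borel" and fb: "\<And>p. \<bar>f p\<bar> \<le> B" using g unfolding good_def by auto
  have fb1: "\<bar>f1 p\<bar> \<le> 2 * B" and nn1: "0 \<le> f1 p" for p
    using fb[of p] unfolding f1_def by (simp_all add: abs_le_iff)
  have g1: "good f1 (2 * B)" unfolding good_def using fb1 fm unfolding f1_def by auto
  have gB: "good (\<lambda>_. B) B" using B unfolding good_def by simp
  interpret V: finite_measure "vert_avg K M" by (rule finite_vert_avg[OF M])
  interpret MM: finite_measure M by (rule M(1))
  have intV: "integrable (vert_avg K M) h" if "good h C" for h C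
    using that unfolding good_def
    by (intro V.integrable_const_bound[where B=C] AE_I2) (auto simp: meas_cong_borel[OF sets_vert_avg])
  have intM: "integrable M h" if "good h C" for h C
    using that unfolding good_def
    by (intro MM.integrable_const_bound[where B=C] AE_I2) (auto simp: meas_cong_borel[OF M(2)])
  have eq: "avgop K f p = avgop K f1 p - avgop K (\<lambda>_. B) p" for p
  proof -
    have "avgop K f1 p - avgop K (\<lambda>_. B) p = avgop K f p"
      unfolding avgop_def sum_subtractf[symmetric]
    proof (rule sum.cong[OF refl])
      fix i assume "i \<in> {..<K}"
      then have i: "i < K" by simp
      show "indicator (strip K i) p * (\<integral> t. f1 (fst p, t) \<partial>uniform_measure lborel (strip_int K i)) -
          indicator (strip K i) p * (\<integral> t. B \<partial>uniform_measure lborel (strip_int K i)) =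
          indicator (strip K i) p * (\<integral> t. f (fst p, t) \<partial>uniform_measure lborel (strip_int K i))"
        unfolding f1_def using int_U_add_const(1)[OF i g, where x="fst p" and c=B] int_U_add_const(2)[OF i g, where c=B] by (auto simp: algebra_simps)
    qed
    then show ?thesis by simp
  qed
  have "integral\<^sup>L (vert_avg K M) f = integral\<^sup>L (vert_avg K M) f1 - integral\<^sup>L (vert_avg K M) (\<lambda>_. B)"
  proof -
    have "integral\<^sup>L (vert_avg K M) f1 = integral\<^sup>L (vert_avg K M) f + integral\<^sup>L (vert_avg K M) (\<lambda>_. B)"
      unfolding f1_def by (rule Bochner_Integration.integral_add[OF intV[OF g] intV[OF gB]])
    then show ?thesis by simp
  qed
  also have "\<dots> = integral\<^sup>L M (avgop K f1) - integral\<^sup>L M (avgop K (\<lambda>_. B))"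
    using integral_vert_avg_nonneg_real[OF M g1 nn1] integral_vert_avg_nonneg_real[OF M gB] B by simp
  also have "\<dots> = integral\<^sup>L M (\<lambda>p. avgop K f1 p - avgop K (\<lambda>_. B) p)"
    using intM[OF good_avgop[OF g1]] intM[OF good_avgop[OF gB]] by simp
  also have "\<dots> = integral\<^sup>L M (avgop K f)" by (simp only: eq[symmetric])
  finally show ?thesis .
qed

lemma lorenz_meas:
  assumes Fmeas: "(\<lambda>p. (T (fst p), G p)) \<in> borel_measurable (restrict_space borel unit_sq)"
  shows "lorenz_map T G \<in> measurable borel borel"
proof -
  have us: "unit_sq \<in> sets borel"
    unfolding unit_sq_def by (intro borel_closed closed_Times) auto
  have "(\<lambda>p. if p \<in> unit_sq then (T (fst p), G p) else p) \<in> measurable borel borel"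
  proof (subst measurable_If_restrict_space_iff)
    show "{x \<in> space borel. x \<in> unit_sq} \<in> sets borel" using us by simp
    show "(\<lambda>p. (T (fst p), G p)) \<in> borel_measurable (restrict_space borel {x. x \<in> unit_sq}) \<and>
      (\<lambda>p. p) \<in> borel_measurable (restrict_space borel {x. x \<notin> unit_sq})"
      using Fmeas by (auto intro!: measurable_restrict_space1)
  qed
  then show ?thesis unfolding lorenz_map_def[abs_def] .
qed

definition Ls :: "nat \<Rightarrow> (real \<Rightarrow> real) \<Rightarrow> (real \<times> real \<Rightarrow> real) \<Rightarrow> (real \<times> real \<Rightarrow> real) \<Rightarrow> real \<times> real \<Rightarrow> real" where
  "Ls K T G f = avgop K (\<lambda>p. avgop K f (lorenz_map T G p))"

lemma good_comp_lorenz: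
  assumes lm: "lorenz_map T G \<in> measurable borel borel" and g: "good f B"
  shows "good (\<lambda>p. f (lorenz_map T G p)) B"
proof -
  have "f \<in> borel_measurable borel" using g unfolding good_def by simp
  then have "(\<lambda>p. f (lorenz_map T G p)) \<in> borel_measurable borel"
    by (rule measurable_compose[OF lm])
  moreover have "\<forall>p. \<bar>f (lorenz_map T G p)\<bar> \<le> B" using g unfolding good_def by blast
  ultimately show ?thesis unfolding good_def by blast
qed

lemma good_Ls:
  assumes lm: "lorenz_map T G \<in> measurable borel borel" and g: "good f B"
  shows "good (Ls K T G f) B"
  unfolding Ls_def by (intro good_avgop good_comp_lorenz[OF lm] g)

lemma L_delta_props:
  assumes M: "finite_measure M" "sets M = sets borel" and lm: "lorenz_map T G \<in> measurable borel borel"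
    and g: "good f B"
  shows "finite_measure (L_delta K T G M)" "sets (L_delta K T G M) = sets borel"
    "integral\<^sup>L (L_delta K T G M) f = integral\<^sup>L M (Ls K T G f)"
proof -
  let ?V = "vert_avg K M"
  let ?T = "transfer T G (vert_avg K M)"
  have fV: "finite_measure ?V" by (rule finite_vert_avg[OF M])
  have sV: "sets ?V = sets borel" by (rule sets_vert_avg)
  have lmV: "lorenz_map T G \<in> measurable ?V borel"
    using lm by (subst measurable_cong_sets[OF sV refl])
  have fT: "finite_measure ?T" unfolding transfer_def
    by (rule finite_measure.finite_measure_distr[OF fV lmV])
  have sT: "sets ?T = sets borel" unfolding transfer_def by simp
  show "finite_measure (L_delta K T G M)" unfolding L_delta_def by (rule finite_vert_avg[OF fT sT])
  show "sets (L_delta K T G M) = sets borel" unfolding L_delta_def by (rule sets_vert_avg)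
  have ga: "good (avgop K f) B" by (rule good_avgop[OF g])
  have "integral\<^sup>L (L_delta K T G M) f = integral\<^sup>L ?T (avgop K f)"
    unfolding L_delta_def by (rule integral_vert_avg[OF fT sT g])
  also have "\<dots> = integral\<^sup>L ?V (\<lambda>p. avgop K f (lorenz_map T G p))"
    unfolding transfer_def
    by (rule integral_distr[OF lmV]) (use ga in \<open>simp add: good_def\<close>)
  also have "\<dots> = integral\<^sup>L M (Ls K T G f)"
    unfolding Ls_def by (rule integral_vert_avg[OF M good_comp_lorenz[OF lm ga]])
  finally show "integral\<^sup>L (L_delta K T G M) f = integral\<^sup>L M (Ls K T G f)" .
qed

lemma L_delta_iter:
  assumes M: "finite_measure M" "sets M = sets borel" and lm: "lorenz_map T G \<in> measurable borel borel"
  shows "finite_measure ((L_delta K T G ^^ n) M) \<and> sets ((L_delta K T G ^^ n) M) = sets borel \<and>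
    (\<forall>f. good f 1 \<longrightarrow> integral\<^sup>L ((L_delta K T G ^^ n) M) f = integral\<^sup>L M ((Ls K T G ^^ n) f))"
proof (induct n)
  case 0
  then show ?case using M by simp
next
  case (Suc n)
  let ?N = "(L_delta K T G ^^ n) M"
  have N: "finite_measure ?N" "sets ?N = sets borel" using Suc by auto
  have e: "(L_delta K T G ^^ Suc n) M = L_delta K T G ?N" by simp
  show ?case unfolding e
  proof (intro conjI allI impI)
    show "finite_measure (L_delta K T G ?N)" by (rule L_delta_props(1)[OF N lm good_mono[of "\<lambda>_. 0" 0 1]]) (simp_all add: good_def)
    show "sets (L_delta K T G ?N) = sets borel" by (rule L_delta_props(2)[OF N lm good_mono[of "\<lambda>_. 0" 0 1]]) (simp_all add: good_def)
    fix f assume g: "good f 1"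
    have "integral\<^sup>L (L_delta K T G ?N) f = integral\<^sup>L ?N (Ls K T G f)"
      by (rule L_delta_props(3)[OF N lm g])
    also have "\<dots> = integral\<^sup>L M ((Ls K T G ^^ n) (Ls K T G f))"
      using Suc good_Ls[OF lm g] by blast
    also have "\<dots> = integral\<^sup>L M ((Ls K T G ^^ Suc n) f)"
      by (simp only: funpow_Suc_right o_apply)
    finally show "integral\<^sup>L (L_delta K T G ?N) f = integral\<^sup>L M ((Ls K T G ^^ Suc n) f)" .
  qed
qed



definition OK :: "(real \<times> real \<Rightarrow> real) \<Rightarrow> real \<Rightarrow> real \<Rightarrow> bool" where
  "OK f c d \<longleftrightarrow> (\<forall>x\<in>{0..1}. \<forall>y\<in>{0..1}. \<forall>y'\<in>{0..1}. \<bar>f (x, y) - f (x, y')\<bar> \<le> c * \<bar>y - y'\<bar> + d)"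

lemma avg_compare:
  fixes h :: "real \<Rightarrow> real"
  assumes U1: "prob_space U1" and U2: "prob_space U2"
    and S1: "AE t in U1. t \<in> S1" and S2: "AE t in U2. t \<in> S2"
    and i1: "integrable U1 h" and i2: "integrable U2 h"
    and le: "\<And>t t'. t \<in> S1 \<Longrightarrow> t' \<in> S2 \<Longrightarrow> h t \<le> h t' + C"
  shows "integral\<^sup>L U1 h \<le> integral\<^sup>L U2 h + C"
proof -
  interpret P1: prob_space U1 by (rule U1)
  interpret P2: prob_space U2 by (rule U2)
  have *: "h t - C \<le> integral\<^sup>L U2 h" if t: "t \<in> S1" for t
  proof (rule P2.integral_ge_const[OF i2])
    show "AE t' in U2. h t - C \<le> h t'" using S2 by eventually_elim (use le[OF t] in force)
  qed
  have "integral\<^sup>L U1 h \<le> integral\<^sup>L U2 h + C"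
  proof (rule P1.integral_le_const[OF i1])
    show "AE t in U1. h t \<le> integral\<^sup>L U2 h + C" using S1 by eventually_elim (use * in force)
  qed
  then show ?thesis .
qed

lemma AE_U: "i < K \<Longrightarrow> AE t in uniform_measure lborel (strip_int K i). t \<in> strip_int K i"
  by (subst AE_uniform_measure) (auto simp: emeasure_strip_int)

lemma OK_avgop:
  assumes g: "good f B" and ok: "OK f c d" and c: "0 \<le> c" and K: "K > 0"
  shows "OK (avgop K f) c (d + 2 * c / real K)"
  unfolding OK_def
proof (intro ballI)
  fix x y y' :: real assume x: "x \<in> {0..1}" and y: "y \<in> {0..1}" and y': "y' \<in> {0..1}"
  obtain i where i: "i < K" "y \<in> strip_int K i" using strip_int_cover[OF K y] by blast
  obtain j where j: "j < K" "y' \<in> strip_int K j" using strip_int_cover[OF K y'] by blast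
  have pi: "(x, y) \<in> strip K i" using x i unfolding strip_def by simp
  have pj: "(x, y') \<in> strip K j" using x j unfolding strip_def by simp
  define C where "C = c * (\<bar>y - y'\<bar> + 2 / real K) + d"
  have key: "\<bar>f (x, t) - f (x, t')\<bar> \<le> C" if t: "t \<in> strip_int K i" and t': "t' \<in> strip_int K j" for t t'
  proof -
    have t01: "t \<in> {0..1}" "t' \<in> {0..1}" using strip_int_sub[OF i(1)] strip_int_sub[OF j(1)] t t' by auto
    have "\<bar>t - y\<bar> \<le> 1 / real K" by (rule strip_int_diam[OF i(1) t i(2)])
    moreover have "\<bar>t' - y'\<bar> \<le> 1 / real K" by (rule strip_int_diam[OF j(1) t' j(2)])
    ultimately have "\<bar>t - t'\<bar> \<le> \<bar>y - y'\<bar> + 2 / real K" by linarith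
    then have "c * \<bar>t - t'\<bar> \<le> c * (\<bar>y - y'\<bar> + 2 / real K)" using c by (rule mult_left_mono)
    moreover have "\<bar>f (x, t) - f (x, t')\<bar> \<le> c * \<bar>t - t'\<bar> + d" using ok x t01 unfolding OK_def by blast
    ultimately show ?thesis unfolding C_def by linarith
  qed
  have key2: "f (x, t) \<le> f (x, t') + C \<and> f (x, t') \<le> f (x, t) + C"
    if "t \<in> strip_int K i" "t' \<in> strip_int K j" for t t'
    using key[OF that] by (simp add: abs_le_iff)
  let ?Ui = "uniform_measure lborel (strip_int K i)"
  let ?Uj = "uniform_measure lborel (strip_int K j)"
  have "integral\<^sup>L ?Ui (\<lambda>t. f (x, t)) \<le> integral\<^sup>L ?Uj (\<lambda>t. f (x, t)) + C"
    by (rule avg_compare[OF prob_U[OF i(1)] prob_U[OF j(1)] AE_U[OF i(1)] AE_U[OF j(1)]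
        integrable_slice[OF i(1) g] integrable_slice[OF j(1) g]]) (use key2 in blast)
  moreover have "integral\<^sup>L ?Uj (\<lambda>t. f (x, t)) \<le> integral\<^sup>L ?Ui (\<lambda>t. f (x, t)) + C"
    by (rule avg_compare[OF prob_U[OF j(1)] prob_U[OF i(1)] AE_U[OF j(1)] AE_U[OF i(1)]
        integrable_slice[OF j(1) g] integrable_slice[OF i(1) g]]) (use key2 in blast)
  ultimately have "\<bar>integral\<^sup>L ?Ui (\<lambda>t. f (x, t)) - integral\<^sup>L ?Uj (\<lambda>t. f (x, t))\<bar> \<le> C" by linarith
  then show "\<bar>avgop K f (x, y) - avgop K f (x, y')\<bar> \<le> c * \<bar>y - y'\<bar> + (d + 2 * c / real K)"
    using avgop_in[OF i(1) pi] avgop_in[OF j(1) pj] unfolding C_def by (simp add: algebra_simps)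
qed

lemma lorenz_facts:
  assumes "lorenz_like T G lam"
  shows "\<forall>x\<in>{0..1}. T x \<in> {0..1}"
    "\<forall>x\<in>{0..1}. \<forall>y1\<in>{0..1}. \<forall>y2\<in>{0..1}. \<bar>G (x, y1) - G (x, y2)\<bar> \<le> lam * \<bar>y1 - y2\<bar>"
    "\<forall>p\<in>unit_sq. 0 < G p \<and> G p < 1"
  using assms unfolding lorenz_like_def Let_def by (elim exE conjE; blast)+

lemma lam_nonneg:
  assumes "lorenz_like T G lam" shows "0 \<le> lam"
proof -
  have z: "(0::real) \<in> {0..1}" and o: "(1::real) \<in> {0..1}" by auto
  have "\<bar>G (0, 0) - G (0, 1)\<bar> \<le> lam * \<bar>0 - 1\<bar>" using lorenz_facts(2)[OF assms] z o by blast
  then show ?thesis by simp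
qed

lemma OK_lorenz:
  assumes F: "lorenz_like T G lam" and ok: "OK f c d" and c: "0 \<le> c"
  shows "OK (\<lambda>p. f (lorenz_map T G p)) (lam * c) d"
  unfolding OK_def
proof (intro ballI)
  fix x y y' :: real assume x: "x \<in> {0..1}" and y: "y \<in> {0..1}" and y': "y' \<in> {0..1}"
  have u: "(x, y) \<in> unit_sq" "(x, y') \<in> unit_sq" using x y y' unfolding unit_sq_def by auto
  have Tx: "T x \<in> {0..1}" using lorenz_facts(1)[OF F] x by blast
  have Gy: "G (x, y) \<in> {0..1}" "G (x, y') \<in> {0..1}" using lorenz_facts(3)[OF F] u by (auto simp: less_imp_le)
  have L: "\<bar>G (x, y) - G (x, y')\<bar> \<le> lam * \<bar>y - y'\<bar>" using lorenz_facts(2)[OF F] x y y' by blast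
  have "\<bar>f (T x, G (x, y)) - f (T x, G (x, y'))\<bar> \<le> c * \<bar>G (x, y) - G (x, y')\<bar> + d"
    using ok Tx Gy unfolding OK_def by blast
  also have "\<dots> \<le> c * (lam * \<bar>y - y'\<bar>) + d" using L c by (simp add: mult_left_mono)
  finally show "\<bar>f (lorenz_map T G (x, y)) - f (lorenz_map T G (x, y'))\<bar> \<le> lam * c * \<bar>y - y'\<bar> + d"
    using u unfolding lorenz_map_def by (simp add: algebra_simps)
qed

lemma avgop_idem:
  assumes g: "good f B"
  shows "avgop K (avgop K f) = avgop K f"
proof
  fix p :: "real \<times> real"
  show "avgop K (avgop K f) p = avgop K f p"
  proof (cases "\<exists>i<K. p \<in> strip K i")
    case True
    then obtain i where i: "i < K" "p \<in> strip K i" by blast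
    interpret U: prob_space "uniform_measure lborel (strip_int K i)" by (rule prob_U[OF i(1)])
    define a where "a = (\<integral> t. f (fst p, t) \<partial>uniform_measure lborel (strip_int K i))"
    have fp: "fst p \<in> {0..1}" using i(2) unfolding strip_def by auto
    have ga: "good (avgop K f) B" by (rule good_avgop[OF g])
    have m: "(\<lambda>t. avgop K f (fst p, t)) \<in> borel_measurable (uniform_measure lborel (strip_int K i))"
      using meas_slice[of "avgop K f" "fst p"] ga unfolding good_def
      by (subst measurable_cong_sets[of _ borel]) simp_all
    have "(\<integral> t. avgop K f (fst p, t) \<partial>uniform_measure lborel (strip_int K i)) =
        (\<integral> t. a \<partial>uniform_measure lborel (strip_int K i))"
    proof (rule integral_cong_AE[OF m])
      show "(\<lambda>t. a) \<in> borel_measurable (uniform_measure lborel (strip_int K i))" by simp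
      show "AE t in uniform_measure lborel (strip_int K i). avgop K f (fst p, t) = a"
        using AE_U[OF i(1)] proof eventually_elim
        case (elim t)
        then have "(fst p, t) \<in> strip K i" using fp unfolding strip_def by simp
        then show ?case unfolding a_def by (subst avgop_in[OF i(1)]) simp_all
      qed
    qed
    also have "\<dots> = a"
    proof -
      have "U.prob UNIV = 1" using U.prob_space by simp
      then show ?thesis by simp
    qed
    finally show ?thesis using avgop_in[OF i] unfolding a_def by simp
  next
    case False
    then show ?thesis using avgop_out[of K p] by auto
  qed
qed



definition Bop :: "nat \<Rightarrow> (real \<Rightarrow> real) \<Rightarrow> (real \<times> real \<Rightarrow> real) \<Rightarrow> (real \<times> real \<Rightarrow> real) \<Rightarrow> real \<times> real \<Rightarrow> real" where
  "Bop K T G h = avgop K (\<lambda>p. h (lorenz_map T G p))"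

lemma good_Bop: "lorenz_map T G \<in> measurable borel borel \<Longrightarrow> good h B \<Longrightarrow> good (Bop K T G h) B"
  unfolding Bop_def by (intro good_avgop good_comp_lorenz)

lemma avgop_Bop: "lorenz_map T G \<in> measurable borel borel \<Longrightarrow> good h B \<Longrightarrow> avgop K (Bop K T G h) = Bop K T G h"
  unfolding Bop_def by (rule avgop_idem[OF good_comp_lorenz])

lemma Ls_pow:
  assumes lm: "lorenz_map T G \<in> measurable borel borel" and g: "good f 1"
  shows "avgop K ((Ls K T G ^^ n) f) = (Bop K T G ^^ n) (avgop K f) \<and> good ((Ls K T G ^^ n) f) 1"
proof (induct n)
  case 0
  then show ?case using g by simp
next
  case (Suc n)
  have e: "(Ls K T G ^^ Suc n) f = Bop K T G ((Bop K T G ^^ n) (avgop K f))"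
    using Suc unfolding Ls_def Bop_def by simp
  have gb: "good ((Bop K T G ^^ n) (avgop K f)) 1"
    using Suc good_avgop by metis
  show ?case
  proof
    show "avgop K ((Ls K T G ^^ Suc n) f) = (Bop K T G ^^ Suc n) (avgop K f)"
      unfolding e using avgop_Bop[OF lm gb] by simp
    show "good ((Ls K T G ^^ Suc n) f) 1" unfolding e by (rule good_Bop[OF lm gb])
  qed
qed

lemma Ls_pow_Suc:
  assumes lm: "lorenz_map T G \<in> measurable borel borel" and g: "good f 1"
  shows "(Ls K T G ^^ Suc n) f = Bop K T G ((Bop K T G ^^ n) (avgop K f))"
  using Ls_pow[OF lm g, of K n] unfolding Ls_def Bop_def by simp

lemma OK_cong: "OK f c d \<Longrightarrow> c = c' \<Longrightarrow> d = d' \<Longrightarrow> OK f c' d'" by simp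

lemma Bop_iter:
  assumes F: "lorenz_like T G lam" and lm: "lorenz_map T G \<in> measurable borel borel"
    and K: "K > 0" and g: "good f 1" and ok: "OK f 1 0"
  shows "OK ((Bop K T G ^^ n) (avgop K f)) (lam ^ n) (2 / real K * (\<Sum>k\<le>n. lam ^ k)) \<and> good ((Bop K T G ^^ n) (avgop K f)) 1"
proof (induct n)
  case 0
  have "OK (avgop K f) 1 (0 + 2 * 1 / real K)" by (rule OK_avgop[OF g ok _ K]) simp
  then show ?case using good_avgop[OF g] by (auto elim: OK_cong)
next
  case (Suc n)
  let ?h = "(Bop K T G ^^ n) (avgop K f)"
  have lam: "0 \<le> lam" by (rule lam_nonneg[OF F])
  have c: "0 \<le> lam ^ n" using lam by simp
  have ok1: "OK (\<lambda>p. ?h (lorenz_map T G p)) (lam * lam ^ n) (2 / real K * (\<Sum>k\<le>n. lam ^ k))"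
    by (rule OK_lorenz[OF F _ c]) (use Suc in blast)
  have gh: "good (\<lambda>p. ?h (lorenz_map T G p)) 1" using Suc good_comp_lorenz[OF lm] by blast
  have ok2: "OK (avgop K (\<lambda>p. ?h (lorenz_map T G p))) (lam * lam ^ n)
      (2 / real K * (\<Sum>k\<le>n. lam ^ k) + 2 * (lam * lam ^ n) / real K)"
    by (rule OK_avgop[OF gh ok1 _ K]) (use lam in simp)
  have "OK ((Bop K T G ^^ Suc n) (avgop K f)) (lam ^ Suc n) (2 / real K * (\<Sum>k\<le>Suc n. lam ^ k))"
    using ok2 unfolding Bop_def by (auto elim!: OK_cong simp: algebra_simps)
  moreover have "good ((Bop K T G ^^ Suc n) (avgop K f)) 1" using Suc good_Bop[OF lm] by simp
  ultimately show ?case by blast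
qed

lemma lower_in: "i < K \<Longrightarrow> real i / real K \<in> strip_int K i"
proof -
  assume i: "i < K"
  then have K: "real K > 0" by simp
  have "real i / real K \<le> 1" using i K by (simp add: field_simps)
  moreover have "real i / real K < real (Suc i) / real K" using K by (simp add: divide_strict_right_mono)
  ultimately show ?thesis unfolding strip_int_def by auto
qed



lemma marg_facts:
  assumes mu: "prob_on_Q \<mu>"
  shows "prob_space (x_marginal \<mu>)" "fst \<in> measurable \<mu> lborel"
proof -
  interpret P: prob_space \<mu> using mu unfolding prob_on_Q_def by simp
  have s: "sets \<mu> = sets borel" using mu unfolding prob_on_Q_def by simp
  show m: "fst \<in> measurable \<mu> lborel"
    using measurable_fst_borel by (subst measurable_cong_sets[OF s, of lborel borel]) simp_all
  show "prob_space (x_marginal \<mu>)" unfolding x_marginal_def by (rule P.prob_space_distr[OF m])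
qed

lemma V_dist_upper:
  assumes mu: "prob_on_Q \<mu>" and nu: "prob_on_Q \<nu>"
    and m: "m \<in> borel_measurable borel" and mb: "\<And>x. \<bar>m x\<bar> \<le> 1"
  shows "\<bar>(\<integral>x. m x \<partial>x_marginal \<mu>) - (\<integral>x. m x \<partial>x_marginal \<nu>)\<bar> \<le> V_dist (x_marginal \<mu>) (x_marginal \<nu>)"
proof -
  let ?S = "{g :: real \<Rightarrow> real. g \<in> borel_measurable borel \<and> (\<forall>x. \<bar>g x\<bar> \<le> 1)}"
  let ?f = "\<lambda>g. \<bar>(\<integral>x. g x \<partial>x_marginal \<mu>) - (\<integral>x. g x \<partial>x_marginal \<nu>)\<bar>"
  have bnd: "\<bar>\<integral>x. g x \<partial>N\<bar> \<le> 1" if N: "prob_space N" "sets N = sets borel" and g: "g \<in> ?S" for N g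
  proof -
    interpret N: prob_space N by (rule N(1))
    have gm: "g \<in> borel_measurable N" using g by (subst measurable_cong_sets[OF N(2) refl]) simp
    have int: "integrable N g"
      by (rule N.integrable_const_bound[where B=1]) (use g gm in auto)
    have b1: "g x \<le> 1" "- 1 \<le> g x" for x using g by (auto simp: abs_le_iff)
    have "(\<integral>x. g x \<partial>N) \<le> 1" by (rule N.integral_le_const[OF int]) (use b1 in auto)
    moreover have "- 1 \<le> (\<integral>x. g x \<partial>N)" by (rule N.integral_ge_const[OF int]) (use b1 in auto)
    ultimately show ?thesis by simp
  qed
  have sx: "sets (x_marginal M) = sets borel" for M unfolding x_marginal_def by simp
  have "bdd_above (?f ` ?S)"
  proof (rule bdd_aboveI2)
    fix g assume g: "g \<in> ?S"
    show "?f g \<le> 2"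
      using bnd[OF marg_facts(1)[OF mu] sx g] bnd[OF marg_facts(1)[OF nu] sx g] by linarith
  qed
  moreover have "m \<in> ?S" using m mb by simp
  ultimately show ?thesis unfolding V_dist_def by (rule cSUP_upper[rotated])
qed

lemma avg_close:
  assumes mu: "prob_on_Q \<mu>" and h: "good h 1" and m: "m \<in> borel_measurable borel" and mb: "\<And>x. \<bar>m x\<bar> \<le> 1"
    and close: "\<And>p. p \<in> unit_sq \<Longrightarrow> \<bar>h p - m (fst p)\<bar> \<le> e"
  shows "\<bar>(\<integral>p. h p \<partial>\<mu>) - (\<integral>x. m x \<partial>x_marginal \<mu>)\<bar> \<le> e"
proof -
  interpret P: prob_space \<mu> using mu unfolding prob_on_Q_def by simp
  have s: "sets \<mu> = sets borel" using mu unfolding prob_on_Q_def by simp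
  have fm: "fst \<in> measurable \<mu> lborel" by (rule marg_facts(2)[OF mu])
  have mfst: "(\<lambda>p. m (fst p)) \<in> borel_measurable \<mu>"
    using measurable_compose[OF fm, of m] m by simp
  have hm: "h \<in> borel_measurable \<mu>" using h unfolding good_def by (subst measurable_cong_sets[OF s refl]) simp
  have ih: "integrable \<mu> h" by (rule P.integrable_const_bound[where B=1]) (use h hm in \<open>auto simp: good_def\<close>)
  have im: "integrable \<mu> (\<lambda>p. m (fst p))" by (rule P.integrable_const_bound[where B=1]) (use mb mfst in auto)
  have e1: "(\<integral>x. m x \<partial>x_marginal \<mu>) = (\<integral>p. m (fst p) \<partial>\<mu>)"
    unfolding x_marginal_def by (rule integral_distr[OF fm]) (use m in simp)
  have "P.prob unit_sq = 1" using mu unfolding prob_on_Q_def measure_def by simp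
  then have ae: "AE p in \<mu>. p \<in> unit_sq" by (rule P.AE_prob_1)
  have c1: "h p - m (fst p) \<le> e" and c2: "- e \<le> h p - m (fst p)" if "p \<in> unit_sq" for p
    using close[OF that] by (simp_all add: abs_le_iff) 
  have id: "integrable \<mu> (\<lambda>p. h p - m (fst p))" using ih im by simp
  have "(\<integral>p. h p - m (fst p) \<partial>\<mu>) \<le> e"
    by (rule P.integral_le_const[OF id]) (use ae in \<open>eventually_elim, use c1 in auto\<close>)
  moreover have "- e \<le> (\<integral>p. h p - m (fst p) \<partial>\<mu>)"
    by (rule P.integral_ge_const[OF id]) (use ae in \<open>eventually_elim, use c2 in auto\<close>)
  moreover have "(\<integral>p. h p - m (fst p) \<partial>\<mu>) = (\<integral>p. h p \<partial>\<mu>) - (\<integral>p. m (fst p) \<partial>\<mu>)"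
    using ih im by simp
  ultimately show ?thesis using e1 by linarith
qed



lemma final_bound:
  assumes mu: "prob_on_Q \<mu>" and nu: "prob_on_Q \<nu>" and g\<phi>: "good \<phi> 1"
    and ok: "OK (avgop K \<phi>) c d" and c: "0 \<le> c" and K: "K > 0"
  shows "\<bar>(\<integral>p. avgop K \<phi> p \<partial>\<mu>) - (\<integral>p. avgop K \<phi> p \<partial>\<nu>)\<bar> \<le> c + d + V_dist (x_marginal \<mu>) (x_marginal \<nu>)"
proof -
  define a where "a = (\<lambda>i x. \<integral> t. \<phi> (x, t) \<partial>uniform_measure lborel (strip_int K i))"
  define m where "m = (\<lambda>x. (Max ((\<lambda>i. a i x) ` {..<K}) + Min ((\<lambda>i. a i x) ` {..<K})) / 2)"
  have fin: "finite {..<K}" by simp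
  have ne: "{..<K} \<noteq> {}" using K by auto
  have ab: "\<bar>a i x\<bar> \<le> 1" if "i < K" for i x unfolding a_def by (rule abs_int_U[OF that g\<phi>])
  have am: "a i \<in> borel_measurable borel" if "i \<in> {..<K}" for i
    unfolding a_def using that g\<phi> unfolding good_def by (intro meas_inner_real) auto
  have mm: "m \<in> borel_measurable borel" unfolding m_def
    by (intro borel_measurable_divide borel_measurable_add borel_measurable_Max[OF fin am]
        borel_measurable_Min[OF fin am] borel_measurable_const)
  have MaxIn: "\<exists>j<K. Max ((\<lambda>i. a i x) ` {..<K}) = a j x" for x
  proof -
    have "Max ((\<lambda>i. a i x) ` {..<K}) \<in> (\<lambda>i. a i x) ` {..<K}" by (rule Max_in) (use fin ne in auto)
    then show ?thesis by auto
  qed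
  have MinIn: "\<exists>j<K. Min ((\<lambda>i. a i x) ` {..<K}) = a j x" for x
  proof -
    have "Min ((\<lambda>i. a i x) ` {..<K}) \<in> (\<lambda>i. a i x) ` {..<K}" by (rule Min_in) (use fin ne in auto)
    then show ?thesis by auto
  qed
  have mb: "\<bar>m x\<bar> \<le> 1" for x
  proof -
    obtain j where j: "j < K" "Max ((\<lambda>i. a i x) ` {..<K}) = a j x" using MaxIn by blast
    obtain k where k: "k < K" "Min ((\<lambda>i. a i x) ` {..<K}) = a k x" using MinIn by blast
    show ?thesis using ab[OF j(1), of x] ab[OF k(1), of x] unfolding m_def j(2) k(2) by (simp add: abs_le_iff)
  qed
  have close: "\<bar>avgop K \<phi> p - m (fst p)\<bar> \<le> (c + d) / 2" if p: "p \<in> unit_sq" for p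
  proof -
    obtain x y where xy: "p = (x, y)" by (cases p)
    have x: "x \<in> {0..1}" and y: "y \<in> {0..1}" using p xy unfolding unit_sq_def by auto
    obtain i where i: "i < K" "y \<in> strip_int K i" using strip_int_cover[OF K y] by blast
    have hp: "avgop K \<phi> p = a i x" using avgop_in[OF i(1), of p \<phi>] i x xy unfolding a_def strip_def by simp
    obtain j where j: "j < K" "Max ((\<lambda>i. a i x) ` {..<K}) = a j x" using MaxIn by blast
    obtain k where k: "k < K" "Min ((\<lambda>i. a i x) ` {..<K}) = a k x" using MinIn by blast
    have jin: "real j / real K \<in> {0..1}" using strip_int_sub[OF j(1)] lower_in[OF j(1)] by blast
    have kin: "real k / real K \<in> {0..1}" using strip_int_sub[OF k(1)] lower_in[OF k(1)] by blast
    have hj: "avgop K \<phi> (x, real j / real K) = a j x"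
      using avgop_in[OF j(1), of "(x, real j / real K)" \<phi>] lower_in[OF j(1)] x unfolding a_def strip_def by simp
    have hk: "avgop K \<phi> (x, real k / real K) = a k x"
      using avgop_in[OF k(1), of "(x, real k / real K)" \<phi>] lower_in[OF k(1)] x unfolding a_def strip_def by simp
    have j0: "0 \<le> real j / real K" "real j / real K \<le> 1" using jin by auto
    have k0: "0 \<le> real k / real K" "real k / real K \<le> 1" using kin by auto
    have o1: "\<bar>avgop K \<phi> (x, real j / real K) - avgop K \<phi> (x, real k / real K)\<bar> \<le> c * \<bar>real j / real K - real k / real K\<bar> + d"
      using ok x jin kin unfolding OK_def by blast
    have "\<bar>real j / real K - real k / real K\<bar> \<le> 1" unfolding abs_le_iff using j0 k0 by linarith
    then have o2: "c * \<bar>real j / real K - real k / real K\<bar> \<le> c * 1" using c by (rule mult_left_mono)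
    from o1 o2 have mm1: "a j x - a k x \<le> c + d" using hj hk by simp
    have "a i x \<le> Max ((\<lambda>i. a i x) ` {..<K})" using i(1) fin by (intro Max_ge) auto
    moreover have "Min ((\<lambda>i. a i x) ` {..<K}) \<le> a i x" using i(1) fin by (intro Min_le) auto
    ultimately have u1: "a i x \<le> a j x" and u2: "a k x \<le> a i x" using j(2) k(2) by simp_all
    have "\<bar>a i x - (a j x + a k x) / 2\<bar> \<le> (c + d) / 2"
      unfolding abs_le_iff using mm1 u1 u2 by (intro conjI; simp add: field_simps)
    then show ?thesis using hp xy j(2) k(2) unfolding m_def by simp
  qed
  have gh: "good (avgop K \<phi>) 1" by (rule good_avgop[OF g\<phi>])
  have A1: "\<bar>(\<integral>p. avgop K \<phi> p \<partial>\<mu>) - (\<integral>x. m x \<partial>x_marginal \<mu>)\<bar> \<le> (c + d) / 2"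
    by (rule avg_close[OF mu gh mm mb close])
  have A2: "\<bar>(\<integral>p. avgop K \<phi> p \<partial>\<nu>) - (\<integral>x. m x \<partial>x_marginal \<nu>)\<bar> \<le> (c + d) / 2"
    by (rule avg_close[OF nu gh mm mb close])
  have A3: "\<bar>(\<integral>x. m x \<partial>x_marginal \<mu>) - (\<integral>x. m x \<partial>x_marginal \<nu>)\<bar> \<le> V_dist (x_marginal \<mu>) (x_marginal \<nu>)"
    by (rule V_dist_upper[OF mu nu mm mb])
  define e where "e = (c + d) / 2"
  have ee: "e + e = c + d" unfolding e_def by simp
  have A1': "\<bar>(\<integral>p. avgop K \<phi> p \<partial>\<mu>) - (\<integral>x. m x \<partial>x_marginal \<mu>)\<bar> \<le> e" using A1 unfolding e_def .
  have A2': "\<bar>(\<integral>p. avgop K \<phi> p \<partial>\<nu>) - (\<integral>x. m x \<partial>x_marginal \<nu>)\<bar> \<le> e" using A2 unfolding e_def .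
  show ?thesis unfolding abs_le_iff
    using abs_le_D1[OF A1'] abs_le_D2[OF A1'] abs_le_D1[OF A2'] abs_le_D2[OF A2'] abs_le_D1[OF A3] abs_le_D2[OF A3] ee
    by (intro conjI) linarith+
qed



lemma h0_good_OK:
  assumes g: "(\<forall>p\<in>unit_sq. \<forall>q\<in>unit_sq. \<bar>g p - g q\<bar> \<le> dist_sup p q) \<and> (\<forall>p\<in>unit_sq. \<bar>g p\<bar> \<le> 1)"
  shows "good (\<lambda>p. indicator unit_sq p * g p) 1" "OK (\<lambda>p. indicator unit_sq p * g p) 1 0"
proof -
  have lip: "\<bar>g p - g q\<bar> \<le> dist_sup p q" if "p \<in> unit_sq" "q \<in> unit_sq" for p q using g that by blast
  have ds: "dist_sup p q \<le> dist p q" for p q :: "real \<times> real"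
    using dist_fst_le[of p q] dist_snd_le[of p q] unfolding dist_sup_def dist_real_def by simp
  have "1-lipschitz_on unit_sq g"
    unfolding lipschitz_on_def
  proof (intro conjI ballI)
    fix p q assume "p \<in> unit_sq" "q \<in> unit_sq"
    then show "dist (g p) (g q) \<le> 1 * dist p q"
      using lip[of p q] ds[of p q] by (simp add: dist_real_def)
  qed simp
  then have cont: "continuous_on unit_sq g" by (rule lipschitz_on_continuous_on)
  have us: "unit_sq \<in> sets borel" unfolding unit_sq_def by (intro borel_closed closed_Times) auto
  have "(\<lambda>p. indicator unit_sq p *\<^sub>R g p) \<in> borel_measurable borel"
    by (rule borel_measurable_continuous_on_indicator[OF us cont])
  then have m: "(\<lambda>p. indicator unit_sq p * g p) \<in> borel_measurable borel" by simp
  have b: "\<bar>indicator unit_sq p * g p\<bar> \<le> 1" for p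
    using g by (cases "p \<in> unit_sq") auto
  show "good (\<lambda>p. indicator unit_sq p * g p) 1" unfolding good_def using m b by blast
  show "OK (\<lambda>p. indicator unit_sq p * g p) 1 0"
    unfolding OK_def
  proof (intro ballI)
    fix x y y' :: real assume x: "x \<in> {0..1}" and y: "y \<in> {0..1}" and y': "y' \<in> {0..1}"
    have u: "(x, y) \<in> unit_sq" "(x, y') \<in> unit_sq" using x y y' unfolding unit_sq_def by auto
    have "\<bar>g (x, y) - g (x, y')\<bar> \<le> dist_sup (x, y) (x, y')" by (rule lip[OF u])
    also have "\<dots> = \<bar>y - y'\<bar>" unfolding dist_sup_def by simp
    finally show "\<bar>indicator unit_sq (x, y) * g (x, y) - indicator unit_sq (x, y') * g (x, y')\<bar> \<le> 1 * \<bar>y - y'\<bar> + 0"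
      using u by simp
  qed
qed

lemma geom_bound:
  fixes lam :: real
  assumes "0 \<le> lam" "lam < 1"
  shows "(\<Sum>k\<le>n. lam ^ k) \<le> 1 / (1 - lam)"
proof -
  have "(\<Sum>k\<le>n. lam ^ k) = (\<Sum>k<Suc n. lam ^ k)" by (simp add: lessThan_Suc_atMost)
  also have "\<dots> = (1 - lam ^ Suc n) / (1 - lam)" using sum_gp_strict[of lam "Suc n"] assms by simp
  also have "\<dots> \<le> 1 / (1 - lam)" using assms by (intro divide_right_mono) auto
  finally show ?thesis .
qed

theorem mainTheorem3:
  fixes T :: "real \<Rightarrow> real" and G :: "real \<times> real \<Rightarrow> real" and lam :: real
    and K :: nat and \<mu> \<nu> :: "(real \<times> real) measure" and n :: nat
  assumes F: "lorenz_like T G lam" and lam: "lam < 1"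
    and Fmeas: "(\<lambda>p. (T (fst p), G p)) \<in> borel_measurable (restrict_space borel unit_sq)"
    and K: "K > 0"
    and mu: "prob_on_Q \<mu>" and nu: "prob_on_Q \<nu>"
    and ac_mu: "absolutely_continuous lborel (x_marginal \<mu>)"
    and ac_nu: "absolutely_continuous lborel (x_marginal \<nu>)"
    and n: "n \<ge> 1"
  shows "W_dist ((L_delta K T G ^^ n) \<mu>) ((L_delta K T G ^^ n) \<nu>)
           \<le> lam ^ n + 2 * (1 / real K) / (1 - lam) + V_dist (x_marginal \<mu>) (x_marginal \<nu>)"
proof -
  have lm: "lorenz_map T G \<in> measurable borel borel" by (rule lorenz_meas[OF Fmeas])
  have lam0: "0 \<le> lam" by (rule lam_nonneg[OF F])
  have fmQ: "finite_measure M" "sets M = sets borel" if "prob_on_Q M" for M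
  proof -
    interpret P: prob_space M using that unfolding prob_on_Q_def by simp
    show "finite_measure M" by (rule finite_measureI) simp
    show "sets M = sets borel" using that unfolding prob_on_Q_def by simp
  qed
  obtain m where nm: "n = Suc m" using n by (cases n) auto
  let ?S = "{g :: real \<times> real \<Rightarrow> real.
        (\<forall>p\<in>unit_sq. \<forall>q\<in>unit_sq. \<bar>g p - g q\<bar> \<le> dist_sup p q) \<and> (\<forall>p\<in>unit_sq. \<bar>g p\<bar> \<le> 1)}"
  have ne: "?S \<noteq> {}"
  proof -
    have "(\<lambda>_. 0) \<in> ?S" unfolding dist_sup_def by auto
    then show ?thesis by (metis empty_iff)
  qed
  show ?thesis
    unfolding W_dist_def
  proof (rule cSUP_least[OF ne])
    fix g assume g: "g \<in> ?S"
    define h0 where "h0 = (\<lambda>p. indicator unit_sq p * g p)"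
    have gh0: "good h0 1" and okh0: "OK h0 1 0" using h0_good_OK g unfolding h0_def by auto
    define \<phi> where "\<phi> = (\<lambda>p. (Bop K T G ^^ m) (avgop K h0) (lorenz_map T G p))"
    have it: "OK ((Bop K T G ^^ n) (avgop K h0)) (lam ^ n) (2 / real K * (\<Sum>k\<le>n. lam ^ k)) \<and> good ((Bop K T G ^^ m) (avgop K h0)) 1"
      using Bop_iter[OF F lm K gh0 okh0, of n] Bop_iter[OF F lm K gh0 okh0, of m] by blast
    have eqH: "(Ls K T G ^^ n) h0 = avgop K \<phi>"
      unfolding nm \<phi>_def using Ls_pow_Suc[OF lm gh0, where K=K and n=m] unfolding Bop_def by simp
    have eqH2: "(Bop K T G ^^ n) (avgop K h0) = avgop K \<phi>"
      unfolding nm \<phi>_def Bop_def by simp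
    have g\<phi>: "good \<phi> 1" unfolding \<phi>_def using it good_comp_lorenz[OF lm] by blast
    have ok: "OK (avgop K \<phi>) (lam ^ n) (2 / real K * (\<Sum>k\<le>n. lam ^ k))" using it eqH2 by simp
    have i1: "integral\<^sup>L ((L_delta K T G ^^ n) \<mu>) h0 = integral\<^sup>L \<mu> ((Ls K T G ^^ n) h0)"
      using L_delta_iter[OF fmQ[OF mu] lm, where K=K and n=n] gh0 by blast
    have i2: "integral\<^sup>L ((L_delta K T G ^^ n) \<nu>) h0 = integral\<^sup>L \<nu> ((Ls K T G ^^ n) h0)"
      using L_delta_iter[OF fmQ[OF nu] lm, where K=K and n=n] gh0 by blast
    have fb: "\<bar>(\<integral>p. avgop K \<phi> p \<partial>\<mu>) - (\<integral>p. avgop K \<phi> p \<partial>\<nu>)\<bar> \<le>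
        lam ^ n + 2 / real K * (\<Sum>k\<le>n. lam ^ k) + V_dist (x_marginal \<mu>) (x_marginal \<nu>)"
      by (rule final_bound[OF mu nu g\<phi> ok _ K]) (use lam0 in simp)
    have "2 / real K * (\<Sum>k\<le>n. lam ^ k) \<le> 2 / real K * (1 / (1 - lam))"
      by (rule mult_left_mono[OF geom_bound[OF lam0 lam]]) simp
    also have "\<dots> = 2 * (1 / real K) / (1 - lam)" by simp
    finally have gb: "2 / real K * (\<Sum>k\<le>n. lam ^ k) \<le> 2 * (1 / real K) / (1 - lam)" .
    have "\<bar>(\<integral>p. indicator unit_sq p * g p \<partial>(L_delta K T G ^^ n) \<mu>) - (\<integral>p. indicator unit_sq p * g p \<partial>(L_delta K T G ^^ n) \<nu>)\<bar>
        = \<bar>(\<integral>p. avgop K \<phi> p \<partial>\<mu>) - (\<integral>p. avgop K \<phi> p \<partial>\<nu>)\<bar>"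
      using i1 i2 eqH unfolding h0_def by simp
    also have "\<dots> \<le> lam ^ n + 2 * (1 / real K) / (1 - lam) + V_dist (x_marginal \<mu>) (x_marginal \<nu>)"
      using fb gb by linarith
    finally show "\<bar>(\<integral>p. indicator unit_sq p * g p \<partial>(L_delta K T G ^^ n) \<mu>) - (\<integral>p. indicator unit_sq p * g p \<partial>(L_delta K T G ^^ n) \<nu>)\<bar>
        \<le> lam ^ n + 2 * (1 / real K) / (1 - lam) + V_dist (x_marginal \<mu>) (x_marginal \<nu>)" .
  qed
qed

end
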